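(* Let $\mathcal{M}=(C,\mathcal{A})$ be a circular-arc model, where $C$ is a circle and $\mathcal{A}=\{A_1=(s_1,t_1),\dots,A_n=(s_n,t_n)\}$ is a family of open arcs of $C$ (arc $(s_i,t_i)$ runs clockwise from $s_i$ to $t_i$), and let $G$ be its intersection graph with vertex $v_i$ corresponding to $A_i$. Assume that no set of at most three arcs of $\mathcal{A}$ has union equal to $C$. Let $p\in C$ be a point with $\max_{q\in C}|\mathcal{A}(q)| = |\mathcal{A}(p)| = 3$, and index the arcs so that $\mathcal{A}(p)=\{A_1,A_2,A_3\}$. Choose $\epsilon>0$ so small that no endpoint of any arc lies in $[p-\epsilon,p+\epsilon]$, and form the interval model obtained by replacing each $A_i$, $i\in\{1,2,3\}$, by the two arcs $(s_i,p-\epsilon)$ and $(p+\epsilon,t_i)$ (all other arcs unchanged). Let $G_p$ be its intersection graph, where $u_i$ ($1\le i\le 3$) corresponds to $(s_i,p-\epsilon)$, $u_{n+i}$ ($1\le i\le 3$) corresponds to $(p+\epsilon,t_i)$, and $u_k$ ($4\le k\le n$) corresponds to $A_k$. Then $\{u_1,u_2,u_3\}$ and $\{u_{n+1},u_{n+2},u_{n+3}\}$ are triangles of $G_p$ that have no common vertex and no edge of $G_p$ joins a vertex of one to a vertex of the other.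
   Context: For a point $q\in C$, $\mathcal{A}(q)$ denotes the set of arcs of $\mathcal{A}$ containing $q$. *)

theory Defs
  imports Complex_Main
begin

text \<open>The circle C is modelled as the reals modulo 1 (R/Z); a real number x denotes the
point frac x. The circle is traversed "clockwise" in the direction of increasing reals.
The open arc (s,t) consists of the points reached strictly after s and strictly before t
when moving from s in this direction.\<close>

definition on_arc :: "real \<Rightarrow> real \<Rightarrow> real \<Rightarrow> bool" where
  "on_arc s t x \<longleftrightarrow> 0 < frac (x - s) \<and> frac (x - s) < frac (t - s)"

definition arc_adj :: "(nat \<Rightarrow> real) \<Rightarrow> (nat \<Rightarrow> real) \<Rightarrow> nat \<Rightarrow> nat \<Rightarrow> bool" where
  "arc_adj s t k l \<longleftrightarrow> k \<noteq> l \<and> (\<exists>x. on_arc (s k) (t k) x \<and> on_arc (s l) (t l) x)"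

definition arcs_at :: "nat \<Rightarrow> (nat \<Rightarrow> real) \<Rightarrow> (nat \<Rightarrow> real) \<Rightarrow> real \<Rightarrow> nat set" where
  "arcs_at n s t q = {i \<in> {1..n}. on_arc (s i) (t i) q}"

definition cut_s :: "nat \<Rightarrow> (nat \<Rightarrow> real) \<Rightarrow> real \<Rightarrow> real \<Rightarrow> nat \<Rightarrow> real" where
  "cut_s n s p \<epsilon> k = (if k \<in> {n+1, n+2, n+3} then p + \<epsilon> else s k)"

definition cut_t :: "nat \<Rightarrow> (nat \<Rightarrow> real) \<Rightarrow> real \<Rightarrow> real \<Rightarrow> nat \<Rightarrow> real" where
  "cut_t n t p \<epsilon> k = (if k \<in> {1, 2, 3} then p - \<epsilon>
                        else if k \<in> {n+1, n+2, n+3} then t (k - n) else t k)"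

end

theory Submission
  imports Defs
begin

lemma frac_eqI: "(x::real) - y \<in> \<int> \<Longrightarrow> frac x = frac y"
proof -
  assume h: "x - y \<in> \<int>"
  have "y - frac y \<in> \<int>" using frac_unique_iff by blast
  have "x - frac y = (x - y) + (y - frac y)" by simp
  hence "x - frac y \<in> \<int>" using h \<open>y - frac y \<in> \<int>\<close> Ints_add by metis
  thus ?thesis using frac_unique_iff frac_ge_0 frac_lt_1 by blast
qed

lemma frac_sub: "(x::real) - frac x \<in> \<int>"
  using frac_unique_iff by blast

lemma int_between: "(z::real) \<in> \<int> \<Longrightarrow> -2 < z \<Longrightarrow> z < 0 \<Longrightarrow> z = -1"
proof -
  assume "z \<in> \<int>" "-2 < z" "z < 0"
  then obtain k where k: "z = of_int k" by (auto elim: Ints_cases)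
  with \<open>-2 < z\<close> \<open>z < 0\<close> have "k = -1" by simp
  thus ?thesis using k by simp
qed

lemma arc_data:
  fixes s t p \<epsilon> :: real
  assumes on: "on_arc s t p" and e: "\<epsilon> > 0"
    and sm: "\<forall>x. p - \<epsilon> \<le> x \<and> x \<le> p + \<epsilon> \<longrightarrow> frac x \<noteq> frac s \<and> frac x \<noteq> frac t"
  shows "\<exists>a b. \<epsilon> < a \<and> \<epsilon> < b \<and> a + b < 1 \<and> p - s - a \<in> \<int> \<and> t - p - b \<in> \<int>
            \<and> frac (t - s) = a + b"
proof -
  define a where "a = frac (p - s)"
  define b where "b = frac (t - p)"
  define c where "c = frac (t - s)"
  have a0: "0 < a" "a < c" using on unfolding on_arc_def a_def c_def by auto
  have ai: "p - s - a \<in> \<int>" unfolding a_def by (rule frac_sub)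
  have bi: "t - p - b \<in> \<int>" unfolding b_def by (rule frac_sub)
  have ci: "t - s - c \<in> \<int>" unfolding c_def by (rule frac_sub)
  have b01: "0 \<le> b" "b < 1" unfolding b_def by (auto simp: frac_lt_1)
  have c01: "0 \<le> c" "c < 1" unfolding c_def by (auto simp: frac_lt_1)
  have abi: "t - s - (a + b) \<in> \<int>"
    using Ints_add[OF ai bi] by (simp add: algebra_simps)
  have ab1: "a + b < 1"
  proof (rule ccontr)
    assume "\<not> a + b < 1"
    hence "t - s - (a + b - 1) \<in> \<int>" using Ints_add[OF abi Ints_1] by (simp add: algebra_simps)
    hence "frac (t - s) = a + b - 1" using \<open>\<not> a + b < 1\<close> b01 a0 c01
      by (subst frac_unique_iff) linarith
    thus False using a0 b01 unfolding c_def by linarith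
  qed
  have cab: "c = a + b"
    unfolding c_def using abi ab1 a0 b01 by (subst frac_unique_iff) auto
  have ea: "\<epsilon> < a"
  proof (rule ccontr)
    assume "\<not> \<epsilon> < a"
    hence "p - \<epsilon> \<le> p - a \<and> p - a \<le> p + \<epsilon>" using a0 e by auto
    moreover have "frac (p - a) = frac s" by (rule frac_eqI) (use ai in \<open>simp add: algebra_simps\<close>)
    ultimately show False using sm by blast
  qed
  have eb: "\<epsilon> < b"
  proof (rule ccontr)
    assume "\<not> \<epsilon> < b"
    hence "p - \<epsilon> \<le> p + b \<and> p + b \<le> p + \<epsilon>" using b01 e by auto
    moreover have "frac (p + b) = frac t"
    proof (rule frac_eqI)
      have "-(t - p - b) \<in> \<int>" using bi by (rule Ints_minus)
      thus "p + b - t \<in> \<int>" by (simp add: algebra_simps)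
    qed
    ultimately show False using sm by blast
  qed
  show ?thesis
    apply (rule exI[of _ a], rule exI[of _ b])
    using ea eb ab1 ai bi cab unfolding c_def by simp
qed



lemma Ints_eq: "(a::real) \<in> \<int> \<Longrightarrow> a = b \<Longrightarrow> b \<in> \<int>" by simp

lemma Ints_01: "(z::real) \<in> \<int> \<Longrightarrow> 0 < z \<Longrightarrow> z < 1 \<Longrightarrow> False"
proof -
  assume "z \<in> \<int>" "0 < z" "z < 1"
  then obtain k where k: "z = of_int k" by (auto elim: Ints_cases)
  with \<open>0 < z\<close> \<open>z < 1\<close> show False by simp
qed

lemma cover:
  fixes si ti sj tj p x ai bi aj bj :: real
  assumes ai: "p - si - ai \<in> \<int>" and fi: "frac (ti - si) = ai + bi"
    and aj: "p - sj - aj \<in> \<int>" and fj: "frac (ti - si) = ai + bi" "frac (tj - sj) = aj + bj"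
    and pos: "0 < ai" "0 < bi" "0 < aj" "0 < bj" "ai + bi < 1" "aj + bj < 1"
    and big: "ai + bj > 1"
  shows "on_arc si ti x \<or> on_arc sj tj x"
proof -
  define y where "y = frac (x - p)"
  have yi: "x - p - y \<in> \<int>" unfolding y_def by (rule frac_sub)
  have y01: "0 \<le> y" "y < 1" unfolding y_def by (auto simp: frac_lt_1)
  show ?thesis
  proof (cases "y < bj")
    case True
    have "x - sj - (y + aj) = (x - p - y) + (p - sj - aj)" by simp
    hence "x - sj - (y + aj) \<in> \<int>" using Ints_add[OF yi aj] by metis
    hence "frac (x - sj) = y + aj" using True y01 pos by (subst frac_unique_iff) auto
    hence "on_arc sj tj x" unfolding on_arc_def using fj True y01 pos by simp
    thus ?thesis by simp
  next
    case False
    have "x - si - (y - 1 + ai) = ((x - p - y) + (p - si - ai)) + 1" by simp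
    hence "x - si - (y - 1 + ai) \<in> \<int>" using Ints_add[OF Ints_add[OF yi ai] Ints_1] by metis
    hence "frac (x - si) = y - 1 + ai" using False y01 pos big by (subst frac_unique_iff) auto
    hence "on_arc si ti x" unfolding on_arc_def using fi False y01 pos big by simp
    thus ?thesis by simp
  qed
qed

lemma disj:
  fixes si tj p x ai bj \<epsilon> :: real
  assumes ai: "p - si - ai \<in> \<int>" and bj: "tj - p - bj \<in> \<int>"
    and pos: "0 < \<epsilon>" "\<epsilon> < ai" "\<epsilon> < bj" "ai < 1" "bj < 1" "ai + bj \<le> 1"
    and o1: "on_arc si (p - \<epsilon>) x" and o2: "on_arc (p + \<epsilon>) tj x"
  shows False
proof -
  have "p - \<epsilon> - si - (ai - \<epsilon>) \<in> \<int>" by (rule Ints_eq[OF ai]) simp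
  hence f1: "frac (p - \<epsilon> - si) = ai - \<epsilon>" using pos by (subst frac_unique_iff) auto
  have "tj - (p + \<epsilon>) - (bj - \<epsilon>) \<in> \<int>" by (rule Ints_eq[OF bj]) simp
  hence f2: "frac (tj - (p + \<epsilon>)) = bj - \<epsilon>" using pos by (subst frac_unique_iff) auto
  define c where "c = frac (x - si)"
  define d where "d = frac (x - (p + \<epsilon>))"
  have c: "0 < c" "c < ai - \<epsilon>" using o1 f1 unfolding on_arc_def c_def by auto
  have d: "0 < d" "d < bj - \<epsilon>" using o2 f2 unfolding on_arc_def d_def by auto
  have ci: "x - si - c \<in> \<int>" unfolding c_def by (rule frac_sub)
  have di: "x - (p + \<epsilon>) - d \<in> \<int>" unfolding d_def by (rule frac_sub)
  have "ai + \<epsilon> + d - c = ((x - si - c) - (p - si - ai)) - (x - (p + \<epsilon>) - d)" by simp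
  hence "ai + \<epsilon> + d - c \<in> \<int>" using Ints_diff[OF Ints_diff[OF ci ai] di] by metis
  moreover have "0 < ai + \<epsilon> + d - c" "ai + \<epsilon> + d - c < 1" using c d pos by auto
  ultimately show False using Ints_01 by blast
qed

lemma tri1:
  fixes si p a \<epsilon> \<delta> :: real
  assumes "p - si - a \<in> \<int>" "0 < \<epsilon>" "\<epsilon> < a" "a < 1" "0 < \<delta>" "\<delta> < a - \<epsilon>"
  shows "on_arc si (p - \<epsilon>) (p - \<epsilon> - \<delta>)"
proof -
  have "p - \<epsilon> - si - (a - \<epsilon>) \<in> \<int>" by (rule Ints_eq[OF assms(1)]) simp
  hence f1: "frac (p - \<epsilon> - si) = a - \<epsilon>" using assms by (subst frac_unique_iff) auto
  have "p - \<epsilon> - \<delta> - si - (a - \<epsilon> - \<delta>) \<in> \<int>" by (rule Ints_eq[OF assms(1)]) simp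
  hence f2: "frac (p - \<epsilon> - \<delta> - si) = a - \<epsilon> - \<delta>" using assms by (subst frac_unique_iff) auto
  show ?thesis unfolding on_arc_def f1 f2 using assms by simp
qed

lemma tri2:
  fixes tj p b \<epsilon> \<delta> :: real
  assumes "tj - p - b \<in> \<int>" "0 < \<epsilon>" "\<epsilon> < b" "b < 1" "0 < \<delta>" "\<delta> < b - \<epsilon>"
  shows "on_arc (p + \<epsilon>) tj (p + \<epsilon> + \<delta>)"
proof -
  have "tj - (p + \<epsilon>) - (b - \<epsilon>) \<in> \<int>" by (rule Ints_eq[OF assms(1)]) simp
  hence f1: "frac (tj - (p + \<epsilon>)) = b - \<epsilon>" using assms by (subst frac_unique_iff) auto
  have f2: "frac (p + \<epsilon> + \<delta> - (p + \<epsilon>)) = \<delta>" using assms by simp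
  show ?thesis unfolding on_arc_def f1 f2 using assms by simp
qed

theorem lemma3:
  fixes n :: nat and s t :: "nat \<Rightarrow> real" and p \<epsilon> :: real
  assumes n3: "n \<ge> 3"
    and nondeg: "\<forall>i\<in>{1..n}. frac (s i) \<noteq> frac (t i)"
    and no_cover: "\<forall>I. I \<subseteq> {1..n} \<and> card I \<le> 3 \<longrightarrow>
                     \<not> (\<forall>x. \<exists>i\<in>I. on_arc (s i) (t i) x)"
    and max3: "\<forall>q. card (arcs_at n s t q) \<le> 3"
    and at_p: "arcs_at n s t p = {1, 2, 3}"
    and eps: "\<epsilon> > 0"
    and eps_small: "\<forall>i\<in>{1..n}. \<forall>x. p - \<epsilon> \<le> x \<and> x \<le> p + \<epsilon> \<longrightarrow>
                       frac x \<noteq> frac (s i) \<and> frac x \<noteq> frac (t i)"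
  shows "(\<forall>k\<in>{1,2,3}. \<forall>l\<in>{1,2,3}. k \<noteq> l \<longrightarrow>
            arc_adj (cut_s n s p \<epsilon>) (cut_t n t p \<epsilon>) k l)
       \<and> (\<forall>k\<in>{n+1,n+2,n+3}. \<forall>l\<in>{n+1,n+2,n+3}. k \<noteq> l \<longrightarrow>
            arc_adj (cut_s n s p \<epsilon>) (cut_t n t p \<epsilon>) k l)
       \<and> {1,2,3} \<inter> {n+1,n+2,n+3} = ({} :: nat set)
       \<and> (\<forall>k\<in>{1,2,3}. \<forall>l\<in>{n+1,n+2,n+3}.
            \<not> arc_adj (cut_s n s p \<epsilon>) (cut_t n t p \<epsilon>) k l)"
proof -
  define P where "P = (\<lambda>i a b. \<epsilon> < a \<and> \<epsilon> < b \<and> a + b < 1 \<and> p - s i - a \<in> \<int> \<and> t i - p - b \<in> \<int>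
            \<and> frac (t i - s i) = a + b)"
  have sub: "{1,2,3} \<subseteq> {1..n}" using n3 by auto
  have "\<forall>i. \<exists>a b. i \<in> {1,2,3} \<longrightarrow> P i a b"
  proof
    fix i
    show "\<exists>a b. i \<in> {1,2,3} \<longrightarrow> P i a b"
    proof (cases "i \<in> {1,2,3}")
      case True
      have on: "on_arc (s i) (t i) p" using at_p True unfolding arcs_at_def by blast
      have "i \<in> {1..n}" using True sub by blast
      hence sm: "\<forall>x. p - \<epsilon> \<le> x \<and> x \<le> p + \<epsilon> \<longrightarrow> frac x \<noteq> frac (s i) \<and> frac x \<noteq> frac (t i)"
        using eps_small by blast
      show ?thesis using arc_data[OF on eps sm] unfolding P_def by blast
    qed simp
  qed
  then obtain a where "\<forall>i. \<exists>b. i \<in> {1,2,3} \<longrightarrow> P i (a i) b" by metis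
  then obtain b where ab0: "\<forall>i. i \<in> {1,2,3} \<longrightarrow> P i (a i) (b i)" by metis
  hence ab: "\<And>i. i \<in> {1,2,3} \<Longrightarrow> \<epsilon> < a i \<and> \<epsilon> < b i \<and> a i + b i < 1 \<and> p - s i - a i \<in> \<int>
       \<and> t i - p - b i \<in> \<int> \<and> frac (t i - s i) = a i + b i" unfolding P_def by blast
  have cs1: "\<And>k. k \<in> {1,2,3} \<Longrightarrow> cut_s n s p \<epsilon> k = s k \<and> cut_t n t p \<epsilon> k = p - \<epsilon>"
    using n3 unfolding cut_s_def cut_t_def by auto
  have cs2: "\<And>j. j \<in> {1,2,3} \<Longrightarrow> cut_s n s p \<epsilon> (n+j) = p + \<epsilon> \<and> cut_t n t p \<epsilon> (n+j) = t j"
    using n3 unfolding cut_s_def cut_t_def by auto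
  have T1: "\<forall>k\<in>{1,2,3}. \<forall>l\<in>{1,2,3}. k \<noteq> l \<longrightarrow>
            arc_adj (cut_s n s p \<epsilon>) (cut_t n t p \<epsilon>) k l"
  proof -
    define \<delta> where "\<delta> = min (a 1 - \<epsilon>) (min (a 2 - \<epsilon>) (a 3 - \<epsilon>)) / 2"
    have a1: "\<epsilon> < a 1" "\<epsilon> < a 2" "\<epsilon> < a 3" using ab by auto
    have d0: "0 < \<delta>" using a1 unfolding \<delta>_def by simp
    have "\<And>k. k \<in> {1,2,3} \<Longrightarrow> on_arc (s k) (p - \<epsilon>) (p - \<epsilon> - \<delta>)"
    proof -
      fix k :: nat assume k: "k \<in> {1,2,3}"
      have "\<delta> < a k - \<epsilon>" using k a1 unfolding \<delta>_def by auto
      thus "on_arc (s k) (p - \<epsilon>) (p - \<epsilon> - \<delta>)"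
        using tri1[of p "s k" "a k" \<epsilon> \<delta>] ab[OF k] eps d0 by auto
    qed
    thus ?thesis unfolding arc_adj_def using cs1 by metis
  qed
  have T2': "\<And>j j'. j \<in> {1,2,3} \<Longrightarrow> j' \<in> {1,2,3} \<Longrightarrow>
            arc_adj (cut_s n s p \<epsilon>) (cut_t n t p \<epsilon>) (n+j) (n+j') \<or> j = j'"
  proof -
    define \<delta> where "\<delta> = min (b 1 - \<epsilon>) (min (b 2 - \<epsilon>) (b 3 - \<epsilon>)) / 2"
    have b1: "\<epsilon> < b 1" "\<epsilon> < b 2" "\<epsilon> < b 3" using ab by auto
    have d0: "0 < \<delta>" using b1 unfolding \<delta>_def by simp
    have on: "\<And>k. k \<in> {1,2,3} \<Longrightarrow> on_arc (p + \<epsilon>) (t k) (p + \<epsilon> + \<delta>)"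
    proof -
      fix k :: nat assume k: "k \<in> {1,2,3}"
      have "\<delta> < b k - \<epsilon>" using k b1 unfolding \<delta>_def by auto
      thus "on_arc (p + \<epsilon>) (t k) (p + \<epsilon> + \<delta>)"
        using tri2[of "t k" p "b k" \<epsilon> \<delta>] ab[OF k] eps d0 by auto
    qed
    fix j j' :: nat assume j: "j \<in> {1,2,3}" "j' \<in> {1,2,3}"
    show "arc_adj (cut_s n s p \<epsilon>) (cut_t n t p \<epsilon>) (n+j) (n+j') \<or> j = j'"
      unfolding arc_adj_def using cs2[OF j(1)] cs2[OF j(2)] on[OF j(1)] on[OF j(2)] by auto
  qed
  have T2: "\<forall>k\<in>{n+1,n+2,n+3}. \<forall>l\<in>{n+1,n+2,n+3}. k \<noteq> l \<longrightarrow>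
            arc_adj (cut_s n s p \<epsilon>) (cut_t n t p \<epsilon>) k l"
  proof (intro ballI impI)
    fix k l assume k: "k \<in> {n+1,n+2,n+3}" and l: "l \<in> {n+1,n+2,n+3}" and kl: "k \<noteq> l"
    obtain j where j: "j \<in> {1,2,3}" "k = n + j" using k by auto
    obtain j' where j': "j' \<in> {1,2,3}" "l = n + j'" using l by auto
    show "arc_adj (cut_s n s p \<epsilon>) (cut_t n t p \<epsilon>) k l" using T2'[OF j(1) j'(1)] j j' kl by auto
  qed
  have T3: "{1,2,3} \<inter> {n+1,n+2,n+3} = ({} :: nat set)" using n3 by auto
  have T4: "\<forall>k\<in>{1,2,3}. \<forall>l\<in>{n+1,n+2,n+3}.
            \<not> arc_adj (cut_s n s p \<epsilon>) (cut_t n t p \<epsilon>) k l"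
  proof (intro ballI notI)
    fix k l assume k: "k \<in> {1,2,3}" and l: "l \<in> {n+1,n+2,n+3}"
      and adj: "arc_adj (cut_s n s p \<epsilon>) (cut_t n t p \<epsilon>) k l"
    obtain j where j: "j \<in> {1,2,3}" "l = n + j" using l by auto
    obtain x where x: "on_arc (s k) (p - \<epsilon>) x" "on_arc (p + \<epsilon>) (t j) x"
      using adj cs1[OF k] cs2[OF j(1)] j(2) unfolding arc_adj_def by auto
    note abk = ab[OF k] and abj = ab[OF j(1)]
    show False
    proof (cases "a k + b j > 1")
      case True
      have cov: "\<forall>y. \<exists>i\<in>{k,j}. on_arc (s i) (t i) y"
      proof
        fix y
        have "on_arc (s k) (t k) y \<or> on_arc (s j) (t j) y"
          using cover[of p "s k" "a k" "t k" "b k" "s j" "a j" "t j" "b j" y] abk abj eps True by auto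
        thus "\<exists>i\<in>{k,j}. on_arc (s i) (t i) y" by auto
      qed
      have "{k,j} \<subseteq> {1..n}" using k j sub by auto
      moreover have "card {k,j} \<le> 3" by (rule order_trans[OF card_insert_le_m1]) auto
      ultimately show False using no_cover cov by blast
    next
      case False
      show False using disj[of p "s k" "a k" "t j" "b j" \<epsilon> x] abk abj eps False x by auto
    qed
  qed
  show ?thesis using T1 T2 T3 T4 by blast
qed

end
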